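(* In the setting below, for any $F_1,\dots,F_n\in K_w[\mathcal G\oplus\mathcal H]$, $\mathop{\mathrm{Res}}_{\mathbf x}J(F_1,\dots,F_n)=0$.
   Context: $K$ a field; $\mathcal G\oplus\mathcal H$ a totally ordered abelian group with $\mathcal H\cong\mathbb Z^n$ with basis $e_1,\dots,e_n$, $x_i=t^{e_i}$; $K_w[\mathcal A]$ denotes Malcev–Neumann series (formal series with well-ordered support) over a TOA-group $\mathcal A$; elements of $K_w[\mathcal G\oplus\mathcal H]$ are written $\sum_{\mathbf k\in\mathbb Z^n}b_{\mathbf k}\mathbf x^{\mathbf k}$ with $b_{\mathbf k}\in K_w[\mathcal G]$. Partial derivatives act termwise, $\mathop{\mathrm{Res}}_{\mathbf x}\sum b_{\mathbf k}\mathbf x^{\mathbf k}=b_{(-1,\dots,-1)}$, and $J(F_1,\dots,F_n)=\det(\partial F_i/\partial x_j)_{i,j}$. *)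

theory Defs
  imports "HOL-Library.Product_Plus" "HOL-Library.Function_Algebras"
    "HOL-Combinatorics.Permutations"
begin

text \<open>The group G (+) H is represented as pairs (g, k) with g in G (a type 'g)
  and k :: 'n => int a vector in Z^n (coordinates w.r.t. the basis e_1..e_n,
  indexed by a finite type 'n).\<close>

definition toa_order :: "('a::ab_group_add \<Rightarrow> 'a \<Rightarrow> bool) \<Rightarrow> bool" where
  "toa_order le \<longleftrightarrow>
     (\<forall>x. le x x) \<and> (\<forall>x y. le x y \<and> le y x \<longrightarrow> x = y) \<and>
     (\<forall>x y z. le x y \<and> le y z \<longrightarrow> le x z) \<and> (\<forall>x y. le x y \<or> le y x) \<and>
     (\<forall>x y z. le x y \<longrightarrow> le (x + z) (y + z))"

definition well_ordered_set :: "('a \<Rightarrow> 'a \<Rightarrow> bool) \<Rightarrow> 'a set \<Rightarrow> bool" where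
  "well_ordered_set le S \<longleftrightarrow> (\<forall>T \<subseteq> S. T \<noteq> {} \<longrightarrow> (\<exists>m\<in>T. \<forall>t\<in>T. le m t))"

definition mn_series :: "('a \<Rightarrow> 'a \<Rightarrow> bool) \<Rightarrow> ('a \<Rightarrow> 'k::zero) \<Rightarrow> bool" where
  "mn_series le f \<longleftrightarrow> well_ordered_set le {a. f a \<noteq> 0}"

definition mn_prod :: "('i::finite \<Rightarrow> 'a::ab_group_add \<Rightarrow> 'k::field) \<Rightarrow> 'a \<Rightarrow> 'k" where
  "mn_prod hs a = (\<Sum>t \<in> {t. (\<Sum>i\<in>UNIV. t i) = a \<and> (\<forall>i. hs i (t i) \<noteq> 0)}.
                      \<Prod>i\<in>UNIV. hs i (t i))"

text \<open>Termwise partial derivative d/dx_j: b x^(k+e_j) contributes (k_j+1) b x^k.\<close>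
definition pdx :: "'n \<Rightarrow> ('g \<times> ('n \<Rightarrow> int) \<Rightarrow> 'k::field) \<Rightarrow> ('g \<times> ('n \<Rightarrow> int) \<Rightarrow> 'k)" where
  "pdx j f = (\<lambda>(g, k). of_int (k j + 1) * f (g, k(j := k j + 1)))"

definition jac :: "('n::finite \<Rightarrow> ('g::ab_group_add \<times> ('n \<Rightarrow> int) \<Rightarrow> 'k::field))
                   \<Rightarrow> ('g \<times> ('n \<Rightarrow> int) \<Rightarrow> 'k)" where
  "jac F = (\<lambda>a. \<Sum>p \<in> {p. p permutes (UNIV :: 'n set)}.
                  of_int (sign p) * mn_prod (\<lambda>i. pdx (p i) (F i)) a)"

definition res_x :: "('g \<times> ('n \<Rightarrow> int) \<Rightarrow> 'k) \<Rightarrow> ('g \<Rightarrow> 'k)" where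
  "res_x f = (\<lambda>g. f (g, \<lambda>_. -1))"

end

theory Submission imports Defs "HOL-Analysis.Analysis" begin

lemma sum_fun_apply: "(\<Sum>i\<in>A. f i) x = (\<Sum>i\<in>A. (f i) x)"
  by (induction A rule: infinite_finite_induct) auto

lemma wo_subseq1:
  fixes s :: "nat \<Rightarrow> 'a::ab_group_add"
  assumes t: "toa_order le" and w: "well_ordered_set le A" and s: "\<And>n. s n \<in> A"
  shows "\<exists>f::nat\<Rightarrow>nat. strict_mono f \<and> (\<forall>m m'. m \<le> m' \<longrightarrow> le (s (f m)) (s (f m')))"
proof -
  have ex: "\<exists>m. m > n \<and> (\<forall>m'>n. le (s m) (s m'))" for n
  proof -
    have A1: "s ` {m. m > n} \<subseteq> A" using s by auto
    have "s (Suc n) \<in> s ` {m. m > n}" by simp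
    then have A2: "s ` {m. m > n} \<noteq> {}" by blast
    note A1 A2
    then obtain x where x: "x \<in> s ` {m. m > n}" "\<forall>y \<in> s ` {m. m > n}. le x y"
      using w unfolding well_ordered_set_def by meson
    from x(1) obtain m where "m > n" "x = s m" by blast
    then show ?thesis using x(2) by auto
  qed
  define g where "g n = (SOME m. m > n \<and> (\<forall>m'>n. le (s m) (s m')))" for n
  have g: "g n > n" "\<And>m'. m' > n \<Longrightarrow> le (s (g n)) (s m')" for n
    using someI_ex[OF ex[of n]] unfolding g_def by auto
  define f where "f k = (g ^^ Suc k) 0" for k
  have fS: "f (Suc k) = g (f k)" for k by (simp add: f_def)
  have sm: "strict_mono f" unfolding strict_mono_Suc_iff fS using g by auto
  have stp: "le (s (f k)) (s (f (Suc k)))" for k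
  proof -
    have fk: "f k = g ((g ^^ k) 0)" by (simp add: f_def)
    have "f (Suc k) > (g ^^ k) 0" using g(1)[of "f k"] g(1)[of "(g ^^ k) 0"] fk fS by simp
    then show ?thesis using g(2) fk by simp
  qed
  have tr: "\<And>x y z. le x y \<Longrightarrow> le y z \<Longrightarrow> le x z" and rf: "\<And>x. le x x"
    using t unfolding toa_order_def by blast+
  have "m \<le> m' \<Longrightarrow> le (s (f m)) (s (f m'))" for m m'
  proof (induction m' rule: dec_induct)
    case base then show ?case by (rule rf)
  next
    case (step n)
    then have "le (s (f m)) (s (f n))" by simp
    then show ?case using stp[of n] by (rule tr)
  qed
  then have mo: "\<forall>m m'. m \<le> m' \<longrightarrow> le (s (f m)) (s (f m'))" by simp
  show ?thesis by (rule exI[where x=f]) (use sm mo in simp)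
qed

lemma wo_subseq:
  fixes u :: "nat \<Rightarrow> 'i \<Rightarrow> 'a::ab_group_add"
  assumes t: "toa_order le" and w: "\<And>i. well_ordered_set le (A i)" and s: "\<And>n i. u n i \<in> A i"
    and I: "finite I"
  shows "\<exists>f::nat\<Rightarrow>nat. strict_mono f \<and> (\<forall>i\<in>I. \<forall>m m'. m \<le> m' \<longrightarrow> le (u (f m) i) (u (f m') i))"
  using I
proof (induction I rule: finite_induct)
  case empty
  show ?case by (rule exI[where x="\<lambda>n::nat. n"]) (simp add: strict_mono_def)
next
  case (insert j I)
  then obtain f :: "nat \<Rightarrow> nat" where f: "strict_mono f" "\<forall>i\<in>I. \<forall>m m'. m \<le> m' \<longrightarrow> le (u (f m) i) (u (f m') i)"
    by (elim exE conjE)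
  have "\<exists>h::nat\<Rightarrow>nat. strict_mono h \<and> (\<forall>m m'. m \<le> m' \<longrightarrow> le (u (f (h m)) j) (u (f (h m')) j))"
    by (rule wo_subseq1[OF t w, of "\<lambda>m. u (f m) j" j]) (rule s)
  then obtain h :: "nat \<Rightarrow> nat" where h: "strict_mono h" "\<forall>m m'. m \<le> m' \<longrightarrow> le (u (f (h m)) j) (u (f (h m')) j)"
    by (elim exE conjE)
  have sm: "strict_mono (f \<circ> h)" using f(1) h(1) by (simp add: strict_mono_def)
  have mo: "\<forall>i\<in>insert j I. \<forall>m m'. m \<le> m' \<longrightarrow> le (u ((f \<circ> h) m) i) (u ((f \<circ> h) m') i)"
  proof (intro ballI allI impI)
    fix i m m' assume i: "i \<in> insert j I" and mm: "(m::nat) \<le> m'"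
    show "le (u ((f \<circ> h) m) i) (u ((f \<circ> h) m') i)"
    proof (cases "i = j")
      case True then show ?thesis using h(2) mm by simp
    next
      case False
      then have "i \<in> I" using i by simp
      moreover have "h m \<le> h m'" using mm h(1) by (simp add: strict_mono_less_eq)
      ultimately show ?thesis using f(2) by simp
    qed
  qed
  show ?case
  proof (intro exI conjI)
    show "strict_mono (f \<circ> h)" by (rule sm)
    show "\<forall>i\<in>insert j I. \<forall>m m'. m \<le> m' \<longrightarrow> le (u ((f \<circ> h) m) i) (u ((f \<circ> h) m') i)" by (rule mo)
  qed
qed

lemma le_sum_mono:
  assumes t: "toa_order le" and I: "finite I" and "\<forall>i\<in>I. le (x i) (y i)"
  shows "le (sum x I) (sum y I)"
  using I assms(3)
proof (induction I rule: finite_induct)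
  case empty then show ?case using t by (simp add: toa_order_def)
next
  case (insert j I)
  have tr: "\<And>x y z. le x y \<Longrightarrow> le y z \<Longrightarrow> le x z" and ad: "\<And>x y z. le x y \<Longrightarrow> le (x + z) (y + z)"
    using t unfolding toa_order_def by blast+
  have "le (x j + sum x I) (y j + sum x I)" using ad insert by simp
  moreover have "le (sum x I + y j) (sum y I + y j)" using ad insert by simp
  ultimately show ?case using insert tr by (simp add: add.commute)
qed

lemma le_sum_eq:
  fixes x y :: "'i::finite \<Rightarrow> 'a::ab_group_add"
  assumes t: "toa_order le" and le: "\<forall>i. le (x i) (y i)" and eq: "sum x UNIV = sum y UNIV"
  shows "x = y"
proof
  fix j :: 'i
  have tr: "\<And>x y z. le x y \<Longrightarrow> le y z \<Longrightarrow> le x z" and ad: "\<And>x y z. le x y \<Longrightarrow> le (x + z) (y + z)"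
    and an: "\<And>x y. le x y \<Longrightarrow> le y x \<Longrightarrow> x = y"
    using t unfolding toa_order_def by blast+
  let ?R = "UNIV - {j}"
  have sx: "sum x UNIV = x j + sum x ?R" and sy: "sum y UNIV = y j + sum y ?R"
    by (simp_all add: sum.remove)
  have 1: "le (sum x ?R + x j) (sum y ?R + x j)" using ad le_sum_mono[OF t _, of ?R x y] le by simp
  have 2: "le (x j + sum y ?R) (y j + sum y ?R)" using ad le by simp
  have "le (y j + sum y ?R) (x j + sum y ?R)"
    using 1 eq sx sy by (simp add: add.commute)
  then have "x j + sum y ?R = y j + sum y ?R" using an 2 by blast
  then show "x j = y j" by simp
qed

lemma fin_fibre:
  fixes A :: "'i::finite \<Rightarrow> 'a::ab_group_add set"
  assumes t: "toa_order le" and w: "\<And>i. well_ordered_set le (A i)"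
  shows "finite {u. sum u UNIV = a \<and> (\<forall>i. u i \<in> A i)}"
proof (rule ccontr)
  let ?S = "{u. sum u UNIV = a \<and> (\<forall>i. u i \<in> A i)}"
  assume "infinite ?S"
  then obtain u :: "nat \<Rightarrow> 'i \<Rightarrow> 'a" where u: "inj u" "range u \<subseteq> ?S"
    using infinite_countable_subset by blast
  have s: "u n i \<in> A i" for n i using u(2) by auto
  have su: "sum (u n) UNIV = a" for n using u(2) by auto
  have "\<exists>f::nat\<Rightarrow>nat. strict_mono f \<and> (\<forall>i\<in>UNIV. \<forall>m m'. m \<le> m' \<longrightarrow> le (u (f m) i) (u (f m') i))"
    by (rule wo_subseq[where u=u and I=UNIV, OF t w s]) simp
  then obtain f :: "nat \<Rightarrow> nat" where f: "strict_mono f" "\<forall>i\<in>UNIV. \<forall>m m'. m \<le> m' \<longrightarrow> le (u (f m) i) (u (f m') i)"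
    by (elim exE conjE)
  have "u (f 0) = u (f 1)"
  proof (rule le_sum_eq[OF t])
    show "\<forall>i. le (u (f 0) i) (u (f 1) i)" using f(2) by simp
    show "sum (u (f 0)) UNIV = sum (u (f 1)) UNIV" using su by simp
  qed
  then have "f 0 = f 1" using u(1) by (simp add: inj_def)
  then show False using f(1) by (simp add: strict_mono_eq)
qed


lemma det_rows_sum_zero:
  fixes k :: "'n::finite \<Rightarrow> 'n \<Rightarrow> int"
  assumes z: "(\<Sum>i\<in>UNIV. k i) = 0"
  shows "(\<Sum>p\<in>{p. p permutes (UNIV::'n set)}. of_int (sign p) * (\<Prod>i\<in>UNIV. (of_int (k i (p i)) :: 'k::field))) = 0"
proof -
  define A :: "'k^'n^'n" where "A = (\<chi> i j. of_int (k i j))"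
  have "(\<Sum>p\<in>{p. p permutes (UNIV::'n set)}. of_int (sign p) * (\<Prod>i\<in>UNIV. (of_int (k i (p i)) :: 'k))) = det A"
    by (simp add: det_def A_def)
  also have "\<dots> = 0"
  proof -
    fix i0 :: 'n
    define x where "x = (\<Sum>j\<in>UNIV - {i0}. row j A)"
    have xs: "x \<in> vec.span {row j A |j. j \<noteq> i0}"
      unfolding x_def by (rule vec.span_sum) (auto intro: vec.span_base)
    have r0: "row i0 A + x = 0"
    proof -
      have "row i0 A + x = (\<Sum>j\<in>UNIV. row j A)"
        unfolding x_def by (simp add: sum.remove[of UNIV i0])
      also have "\<dots> = 0"
      proof (rule vec_eq_iff[THEN iffD2], rule allI)
        fix c
        have "(\<Sum>j\<in>UNIV. row j A) $ c = (\<Sum>j\<in>UNIV. of_int (k j c))"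
          by (simp add: sum_component row_def A_def)
        also have "\<dots> = of_int (\<Sum>j\<in>UNIV. k j c)" by simp
        also have "(\<Sum>j\<in>UNIV. k j c) = (\<Sum>j\<in>UNIV. k j) c" by (simp add: sum_fun_apply)
        finally show "(\<Sum>j\<in>UNIV. row j A) $ c = 0 $ c" using z by simp
      qed
      finally show ?thesis .
    qed
    have "det A = det (\<chi> k. if k = i0 then row i0 A + x else row k A)"
      using det_row_span[OF xs] by simp
    also have "\<dots> = 0"
    proof (rule det_zero_row(2)[of i0])
      have rr: "row i0 M = M $ i0" for M :: "'k^'n^'n" by (simp add: row_def vec_eq_iff)
      show "row i0 (\<chi> k. if k = i0 then row i0 A + x else row k A) = 0"
        using r0 unfolding rr by simp
    qed
    finally show "det A = 0" .
  qed
  finally show ?thesis .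
qed


definition ev :: "'n \<Rightarrow> 'g::ab_group_add \<times> ('n \<Rightarrow> int)" where
  "ev j = (0, \<lambda>x. if x = j then 1 else 0)"

lemma pdx_ev: "pdx j f t = of_int (snd (t + ev j) j) * f (t + ev j)"
proof (cases t)
  case (Pair g k)
  have "k(j := k j + 1) = k + (\<lambda>x. if x = j then 1 else 0)" by (auto simp: fun_eq_iff)
  then show ?thesis by (simp add: Pair pdx_def ev_def)
qed

lemma sum_ev_perm:
  assumes p: "p permutes (UNIV::'n::finite set)"
  shows "(\<Sum>i\<in>UNIV. (ev (p i) :: 'g::ab_group_add \<times> ('n \<Rightarrow> int))) = (0, \<lambda>_. 1)"
proof -
  have "(\<Sum>i\<in>UNIV. (ev (p i) :: 'g \<times> ('n \<Rightarrow> int))) = (\<Sum>i\<in>UNIV. ev i)"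
    using sum.reindex[OF permutes_inj[OF p], of "ev :: 'n \<Rightarrow> 'g \<times> ('n \<Rightarrow> int)"] permutes_image[OF p] by (simp add: comp_def)
  also have "\<dots> = (0, \<lambda>_. 1)"
  proof (rule prod_eqI)
    show "fst (\<Sum>i\<in>UNIV. (ev i :: 'g \<times> ('n \<Rightarrow> int))) = fst ((0::'g), (\<lambda>_. 1::int))"
      by (simp add: fst_sum ev_def)
    show "snd (\<Sum>i\<in>UNIV. (ev i :: 'g \<times> ('n \<Rightarrow> int))) = snd ((0::'g), (\<lambda>_. 1::int))"
      by (simp add: snd_sum ev_def sum_fun_apply fun_eq_iff)
  qed
  finally show ?thesis .
qed


lemma mn_prod_pdx:
  fixes F :: "'n::finite \<Rightarrow> ('g::ab_group_add \<times> ('n \<Rightarrow> int) \<Rightarrow> 'k::field)"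
  assumes p: "p permutes (UNIV::'n set)"
    and S_def: "S = {s. sum s UNIV = (g, 0) \<and> (\<forall>i. s i \<in> {a. F i a \<noteq> 0})}"
    and fS: "finite S"
  shows "mn_prod (\<lambda>i. pdx (p i) (F i)) (g, \<lambda>_. -1) =
         (\<Sum>s\<in>S. \<Prod>i\<in>UNIV. of_int (snd (s i) (p i)) * F i (s i))"
proof -
  define c where "c i s = of_int (snd s (p i)) * F i s" for i s
  define T where "T = {t. (\<Sum>i\<in>UNIV. t i) = (g, \<lambda>_. -1) \<and> (\<forall>i. pdx (p i) (F i) (t i) \<noteq> 0)}"
  define Sp where "Sp = {s\<in>S. \<forall>i. c i (s i) \<noteq> 0}"
  define phi where "phi t = (\<lambda>i. t i + ev (p i))" for t :: "'n \<Rightarrow> 'g \<times> ('n \<Rightarrow> int)"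
  define psi where "psi t = (\<lambda>i. t i - ev (p i))" for t :: "'n \<Rightarrow> 'g \<times> ('n \<Rightarrow> int)"
  have pd: "pdx (p i) (F i) t = c i (t + ev (p i))" for i t
    by (simp add: pdx_ev c_def)
  have se: "(\<Sum>i\<in>UNIV. (ev (p i) :: 'g \<times> ('n \<Rightarrow> int))) = (0, \<lambda>_. 1)"
    by (rule sum_ev_perm[OF p])
  have sphi: "sum (phi t) UNIV = sum t UNIV + (0, \<lambda>_. 1)" for t
    by (simp add: phi_def sum.distrib se)
  have spsi: "sum (psi t) UNIV = sum t UNIV - (0, \<lambda>_. 1)" for t
    by (simp add: psi_def sum_subtractf se)
  have "mn_prod (\<lambda>i. pdx (p i) (F i)) (g, \<lambda>_. -1) = (\<Sum>t\<in>T. \<Prod>i\<in>UNIV. pdx (p i) (F i) (t i))"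
    by (simp add: mn_prod_def T_def)
  also have "\<dots> = (\<Sum>s\<in>Sp. \<Prod>i\<in>UNIV. c i (s i))"
  proof (rule sum.reindex_bij_witness[where j = phi and i = psi])
    fix t assume "t \<in> T"
    show "psi (phi t) = t" by (simp add: phi_def psi_def)
  next
    fix t assume t: "t \<in> T"
    have "sum (phi t) UNIV = (g, 0)"
      using t unfolding sphi T_def by (simp add: zero_fun_def plus_fun_def)
    moreover have "c i (phi t i) \<noteq> 0" for i using t pd unfolding T_def phi_def by simp
    ultimately show "phi t \<in> Sp" unfolding Sp_def S_def c_def by auto
  next
    fix s assume "s \<in> Sp"
    show "phi (psi s) = s" by (simp add: phi_def psi_def)
  next
    fix s assume s: "s \<in> Sp"
    have "sum (psi s) UNIV = (g, \<lambda>_. -1)"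
      using s unfolding spsi Sp_def S_def by (simp add: fun_eq_iff)
    moreover have "pdx (p i) (F i) (psi s i) \<noteq> 0" for i
      using s unfolding pd Sp_def psi_def by simp
    ultimately show "psi s \<in> T" unfolding T_def by simp
  next
    fix t assume "t \<in> T"
    show "(\<Prod>i\<in>UNIV. c i (phi t i)) = (\<Prod>i\<in>UNIV. pdx (p i) (F i) (t i))"
      by (simp add: pd phi_def)
  qed
  also have "\<dots> = (\<Sum>s\<in>S. \<Prod>i\<in>UNIV. c i (s i))"
  proof (rule sum.mono_neutral_left[OF fS])
    show "Sp \<subseteq> S" unfolding Sp_def by auto
    show "\<forall>s\<in>S - Sp. (\<Prod>i\<in>UNIV. c i (s i)) = 0" unfolding Sp_def by auto
  qed
  finally show ?thesis by (simp add: c_def)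
qed


theorem mainTheorem8:
  fixes le :: "'g::ab_group_add \<times> ('n::finite \<Rightarrow> int) \<Rightarrow> 'g \<times> ('n \<Rightarrow> int) \<Rightarrow> bool"
    and F :: "'n \<Rightarrow> ('g \<times> ('n \<Rightarrow> int) \<Rightarrow> 'k::field)"
  assumes "toa_order le"
    and "\<forall>i. mn_series le (F i)"
  shows "res_x (jac F) = (\<lambda>_. 0)"
proof
  fix g :: 'g
  define S where "S = {s. sum s UNIV = (g, 0) \<and> (\<forall>i. s i \<in> {a. F i a \<noteq> 0})}"
  have fS: "finite S" unfolding S_def
    by (rule fin_fibre[OF assms(1)]) (use assms(2) in \<open>simp add: mn_series_def\<close>)
  let ?P = "{p. p permutes (UNIV::'n set)}"
  have "res_x (jac F) g = (\<Sum>p\<in>?P. of_int (sign p) * mn_prod (\<lambda>i. pdx (p i) (F i)) (g, \<lambda>_. -1))"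
    by (simp add: res_x_def jac_def)
  also have "\<dots> = (\<Sum>p\<in>?P. of_int (sign p) * (\<Sum>s\<in>S. \<Prod>i\<in>UNIV. of_int (snd (s i) (p i)) * F i (s i)))"
    by (rule sum.cong[OF refl]) (simp add: mn_prod_pdx[OF _ S_def fS])
  also have "\<dots> = (\<Sum>p\<in>?P. \<Sum>s\<in>S. (\<Prod>i\<in>UNIV. F i (s i)) * (of_int (sign p) * (\<Prod>i\<in>UNIV. of_int (snd (s i) (p i)))))"
    by (simp add: sum_distrib_left prod.distrib mult_ac)
  also have "\<dots> = (\<Sum>s\<in>S. (\<Prod>i\<in>UNIV. F i (s i)) * (\<Sum>p\<in>?P. of_int (sign p) * (\<Prod>i\<in>UNIV. of_int (snd (s i) (p i)))))"
    by (simp add: sum.swap[of _ ?P] sum_distrib_left)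
  also have "\<dots> = 0"
  proof (rule sum.neutral, rule ballI)
    fix s assume "s \<in> S"
    then have "(\<Sum>i\<in>UNIV. snd (s i)) = 0" unfolding S_def by (simp add: snd_sum[symmetric])
    then have "(\<Sum>p\<in>?P. of_int (sign p) * (\<Prod>i\<in>UNIV. (of_int (snd (s i) (p i)) :: 'k))) = 0"
      by (rule det_rows_sum_zero)
    then show "(\<Prod>i\<in>UNIV. F i (s i)) * (\<Sum>p\<in>?P. of_int (sign p) * (\<Prod>i\<in>UNIV. of_int (snd (s i) (p i)))) = 0"
      by simp
  qed
  finally show "res_x (jac F) g = 0" .
qed

end
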